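(* Consider the single-armed lazy restless bandit described in the context with fixed subsidy $\eta$ and $p_{0,0}<p_{1,0}$, and let $b=\min\left\{1,\frac{R_1-R_0}{\rho_1-\rho_0}\right\}$. Then $\pi\mapsto V_S(\pi)-V_{NS}(\pi)$ is decreasing on $[0,1]$ under either of the following conditions: (1) for any $K>1$, when $0<p_{1,0}-p_{0,0}<b/5$ and $\beta\in(0,1)$; (2) for any $K>1$, when $\beta\in(0,b/5)$.
   Context: Single-armed lazy restless bandit: an arm has a hidden state in $\{0,1\}$ evolving as a two-state Markov chain with transition probabilities $p_{i,j}$ ($p_{i,0}+p_{i,1}=1$). During each session the chain makes exactly $K\ge1$ transitions. In each session the decision maker plays the arm or not. If played with the arm in state $i$ at session start, an ACK is received with probability $\rho_i\in[0,1]$ and the expected reward is $R_i$; if not played, subsidy $\eta$ is received and nothing observed. Discount $\beta\in(0,1)$. Standing assumptions: $\rho_0<\rho_1$, $R_0<R_1$. Belief $\pi\in[0,1]$ = probability of state $0$. $R_S(\pi)=\pi R_0+(1-\pi)R_1$, $\rho(\pi)=\pi\rho_0+(1-\pi)\rho_1$, $\gamma_1(\pi)=\frac{(1-\pi)\rho_1p_{1,0}+\pi\rho_0p_{0,0}}{\rho_1(1-\pi)+\rho_0\pi}$, $\gamma_0(\pi)=\frac{(1-\pi)(1-\rho_1)p_{1,0}+\pi(1-\rho_0)p_{0,0}}{(1-\rho_1)(1-\pi)+(1-\rho_0)\pi}$, $\gamma_2(\pi)=(p_{0,0}-p_{1,0})^K\pi+p_{1,0}\sum_{j=0}^{K-1}(p_{0,0}-p_{1,0})^j$.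 $V_S,V_{NS},V$ are the unique bounded solution of $V_S(\pi)=R_S(\pi)+\beta\big(\rho(\pi)V(\gamma_1(\pi))+(1-\rho(\pi))V(\gamma_0(\pi))\big)$, $V_{NS}(\pi)=\eta+\beta V(\gamma_2(\pi))$, $V(\pi)=\max\{V_S(\pi),V_{NS}(\pi)\}$ (a term with zero coefficient is taken to be $0$). *)

theory Defs
  imports "HOL-Analysis.Analysis"
begin

text \<open>Belief pi = probability of state 0.
  Parameters: p00 = p_{0,0}, p10 = p_{1,0} (so p_{0,1} = 1 - p00, p_{1,1} = 1 - p10),
  rho0, rho1 (ACK probabilities), R0, R1 (rewards), K (transitions per session).\<close>

definition R_S :: "real \<Rightarrow> real \<Rightarrow> real \<Rightarrow> real" where
  "R_S R0 R1 \<pi> = \<pi> * R0 + (1 - \<pi>) * R1"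

definition rho :: "real \<Rightarrow> real \<Rightarrow> real \<Rightarrow> real" where
  "rho \<rho>0 \<rho>1 \<pi> = \<pi> * \<rho>0 + (1 - \<pi>) * \<rho>1"

definition gamma1 :: "real \<Rightarrow> real \<Rightarrow> real \<Rightarrow> real \<Rightarrow> real \<Rightarrow> real" where
  "gamma1 p00 p10 \<rho>0 \<rho>1 \<pi> =
     ((1 - \<pi>) * \<rho>1 * p10 + \<pi> * \<rho>0 * p00) / (\<rho>1 * (1 - \<pi>) + \<rho>0 * \<pi>)"

definition gamma0 :: "real \<Rightarrow> real \<Rightarrow> real \<Rightarrow> real \<Rightarrow> real \<Rightarrow> real" where
  "gamma0 p00 p10 \<rho>0 \<rho>1 \<pi> =
     ((1 - \<pi>) * (1 - \<rho>1) * p10 + \<pi> * (1 - \<rho>0) * p00) /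
     ((1 - \<rho>1) * (1 - \<pi>) + (1 - \<rho>0) * \<pi>)"

definition gamma2 :: "real \<Rightarrow> real \<Rightarrow> nat \<Rightarrow> real \<Rightarrow> real" where
  "gamma2 p00 p10 K \<pi> = (p00 - p10) ^ K * \<pi> + p10 * (\<Sum>j<K. (p00 - p10) ^ j)"

text \<open>(VS, VNS, V) is a bounded solution on [0,1] of the Bellman equations.
  A term with zero coefficient contributes 0 automatically, since it is multiplied by 0.\<close>

definition bandit_solution ::
  "real \<Rightarrow> real \<Rightarrow> real \<Rightarrow> real \<Rightarrow> real \<Rightarrow> real \<Rightarrow> real \<Rightarrow> real \<Rightarrow> nat \<Rightarrow>
   (real \<Rightarrow> real) \<Rightarrow> (real \<Rightarrow> real) \<Rightarrow> (real \<Rightarrow> real) \<Rightarrow> bool" where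
  "bandit_solution p00 p10 \<rho>0 \<rho>1 R0 R1 \<eta> \<beta> K VS VNS V \<longleftrightarrow>
     bounded (VS ` {0..1}) \<and> bounded (VNS ` {0..1}) \<and> bounded (V ` {0..1}) \<and>
     (\<forall>\<pi>\<in>{0..1}.
        VS \<pi> = R_S R0 R1 \<pi> + \<beta> * (rho \<rho>0 \<rho>1 \<pi> * V (gamma1 p00 p10 \<rho>0 \<rho>1 \<pi>)
                 + (1 - rho \<rho>0 \<rho>1 \<pi>) * V (gamma0 p00 p10 \<rho>0 \<rho>1 \<pi>)) \<and>
        VNS \<pi> = \<eta> + \<beta> * V (gamma2 p00 p10 K \<pi>) \<and>
        V \<pi> = max (VS \<pi>) (VNS \<pi>))"

end

theory Submission
  imports Defs
begin

lemma div01: "0 \<le> (a::real) \<Longrightarrow> a \<le> b \<Longrightarrow> 0 \<le> a/b \<and> a/b \<le> 1"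
  by (cases "b = 0") (auto simp: divide_le_eq_1)

lemma rho_mul_g1:
  assumes "0 \<le> \<rho>0" "\<rho>0 < \<rho>1" "0 \<le> x" "x \<le> 1"
  shows "rho \<rho>0 \<rho>1 x * gamma1 p00 p10 \<rho>0 \<rho>1 x = (1-x)*\<rho>1*p10 + x*\<rho>0*p00"
proof (cases "\<rho>1 * (1 - x) + \<rho>0 * x = 0")
  case True
  have "\<rho>1 * (1 - x) \<ge> 0" "\<rho>0 * x \<ge> 0" using assms by auto
  then have a: "\<rho>1 * (1 - x) = 0" "\<rho>0 * x = 0" using True by linarith+
  have "rho \<rho>0 \<rho>1 x = \<rho>1 * (1 - x) + \<rho>0 * x" unfolding rho_def by (simp add: algebra_simps)
  then have "rho \<rho>0 \<rho>1 x = 0" using a by simp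
  moreover have "(1-x)*\<rho>1*p10 + x*\<rho>0*p00 = (\<rho>1 * (1 - x))*p10 + (\<rho>0 * x)*p00" by (simp add: ac_simps)
  ultimately show ?thesis using a by simp
next
  case False
  then show ?thesis unfolding rho_def gamma1_def by (simp add: field_simps)
qed

lemma rho_mul_g0:
  assumes "\<rho>1 \<le> 1" "\<rho>0 < \<rho>1" "0 \<le> x" "x \<le> 1"
  shows "(1 - rho \<rho>0 \<rho>1 x) * gamma0 p00 p10 \<rho>0 \<rho>1 x = (1-x)*(1-\<rho>1)*p10 + x*(1-\<rho>0)*p00"
proof (cases "(1 - \<rho>1) * (1 - x) + (1 - \<rho>0) * x = 0")
  case True
  have "(1-\<rho>1) * (1 - x) \<ge> 0" "(1-\<rho>0) * x \<ge> 0" using assms by auto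
  then have a: "(1-\<rho>1) * (1 - x) = 0" "(1-\<rho>0) * x = 0" using True by linarith+
  have "1 - rho \<rho>0 \<rho>1 x = (1 - \<rho>1) * (1 - x) + (1 - \<rho>0) * x" unfolding rho_def by (simp add: algebra_simps)
  then have "1 - rho \<rho>0 \<rho>1 x = 0" using a by simp
  moreover have "(1-x)*(1-\<rho>1)*p10 + x*(1-\<rho>0)*p00 = ((1-\<rho>1) * (1 - x))*p10 + ((1-\<rho>0) * x)*p00" by (simp add: ac_simps)
  ultimately show ?thesis using a by simp
next
  case False
  have "1 - rho \<rho>0 \<rho>1 x = (1 - \<rho>1) * (1 - x) + (1 - \<rho>0) * x" unfolding rho_def by algebra
  then show ?thesis using False unfolding gamma0_def by (simp add: field_simps)
qed

lemma g1_01: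
  assumes "0 \<le> p00" "p00 \<le> 1" "0 \<le> p10" "p10 \<le> 1" "0 \<le> \<rho>0" "\<rho>0 < \<rho>1" "0 \<le> x" "x \<le> 1"
  shows "0 \<le> gamma1 p00 p10 \<rho>0 \<rho>1 x \<and> gamma1 p00 p10 \<rho>0 \<rho>1 x \<le> 1"
  unfolding gamma1_def
proof (rule div01)
  show "0 \<le> (1 - x) * \<rho>1 * p10 + x * \<rho>0 * p00" using assms by simp
  have "(\<rho>1 * (1 - x)) * p10 \<le> \<rho>1 * (1 - x)" using assms by (intro mult_left_le) auto
  then have "(1 - x) * \<rho>1 * p10 \<le> \<rho>1 * (1 - x)" by (simp add: ac_simps)
  moreover have "(\<rho>0 * x) * p00 \<le> \<rho>0 * x" using assms by (intro mult_left_le) auto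
  then have "x * \<rho>0 * p00 \<le> \<rho>0 * x" by (simp add: ac_simps)
  ultimately show "(1 - x) * \<rho>1 * p10 + x * \<rho>0 * p00 \<le> \<rho>1 * (1 - x) + \<rho>0 * x" by linarith
qed

lemma g0_01:
  assumes "0 \<le> p00" "p00 \<le> 1" "0 \<le> p10" "p10 \<le> 1" "\<rho>1 \<le> 1" "\<rho>0 < \<rho>1" "0 \<le> x" "x \<le> 1"
  shows "0 \<le> gamma0 p00 p10 \<rho>0 \<rho>1 x \<and> gamma0 p00 p10 \<rho>0 \<rho>1 x \<le> 1"
  unfolding gamma0_def
proof (rule div01)
  show "0 \<le> (1 - x) * (1 - \<rho>1) * p10 + x * (1 - \<rho>0) * p00" using assms by simp
  have "((1 - \<rho>1) * (1 - x)) * p10 \<le> (1 - \<rho>1) * (1 - x)" using assms by (intro mult_left_le) auto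
  then have "(1 - x) * (1 - \<rho>1) * p10 \<le> (1 - \<rho>1) * (1 - x)" by (simp add: ac_simps)
  moreover have "((1 - \<rho>0) * x) * p00 \<le> (1 - \<rho>0) * x" using assms by (intro mult_left_le) auto
  then have "x * (1 - \<rho>0) * p00 \<le> (1 - \<rho>0) * x" by (simp add: ac_simps)
  ultimately show "(1 - x) * (1 - \<rho>1) * p10 + x * (1 - \<rho>0) * p00 \<le> (1 - \<rho>1) * (1 - x) + (1 - \<rho>0) * x" by linarith
qed

lemma g2_Suc: "gamma2 p00 p10 (Suc n) x = gamma2 p00 p10 n (x * p00 + (1 - x) * p10)"
  unfolding gamma2_def by (simp add: algebra_simps)

lemma g2_01:
  assumes "0 \<le> p00" "p00 \<le> 1" "0 \<le> p10" "p10 \<le> 1" "0 \<le> x" "x \<le> 1"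
  shows "0 \<le> gamma2 p00 p10 n x \<and> gamma2 p00 p10 n x \<le> 1"
  using assms(5,6)
proof (induction n arbitrary: x)
  case 0
  then show ?case by (simp add: gamma2_def)
next
  case (Suc n)
  have "0 \<le> x * p00 + (1 - x) * p10" using assms Suc.prems by simp
  moreover have "x * p00 + (1 - x) * p10 \<le> x * 1 + (1 - x) * 1"
    using assms Suc.prems by (intro add_mono mult_left_mono) auto
  ultimately show ?case using Suc.IH[of "x * p00 + (1 - x) * p10"] by (simp add: g2_Suc)
qed

lemma g2_diff: "gamma2 p00 p10 K x - gamma2 p00 p10 K y = (p00 - p10)^K * (x - y)"
  unfolding gamma2_def by (simp add: algebra_simps)

lemma nonneg_from_prod: "p * q * (a - b) = (D::real) \<Longrightarrow> 0 \<le> D \<Longrightarrow> 0 < p \<Longrightarrow> 0 < q \<Longrightarrow> 0 \<le> a - b"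
  by (metis mult_pos_pos zero_le_mult_iff not_le)

lemma term_bound:
  fixes c a b C e :: real
  assumes "0 \<le> c" "0 \<le> c * (a - b)" "\<bar>V a - V b\<bar> \<le> C * \<bar>a - b\<bar> + e" "0 \<le> C"
  shows "\<bar>c * (V a - V b)\<bar> \<le> C * (c * (a - b)) + c * e"
proof -
  have "\<bar>c * (V a - V b)\<bar> = c * \<bar>V a - V b\<bar>" using assms(1) by (simp add: abs_mult)
  also have "\<dots> \<le> c * (C * \<bar>a - b\<bar> + e)" using assms by (intro mult_left_mono) auto
  also have "\<dots> = C * (c * \<bar>a - b\<bar>) + c * e" by (simp add: algebra_simps)
  also have "c * \<bar>a - b\<bar> = c * (a - b)" using assms(1,2) by (metis abs_mult abs_of_nonneg)
  finally show ?thesis .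
qed

lemma W_bound:
  fixes V :: "real \<Rightarrow> real"
  assumes p: "0 \<le> p00" "p00 < p10" "p10 \<le> 1" and r: "0 \<le> \<rho>0" "\<rho>0 < \<rho>1" "\<rho>1 \<le> 1"
    and xy: "0 \<le> x" "x \<le> y" "y \<le> 1"
    and L: "\<forall>u\<in>{0..1}. \<forall>v\<in>{0..1}. \<bar>V u - V v\<bar> \<le> C * \<bar>u - v\<bar> + e"
    and C: "0 \<le> C"
  shows "\<bar>(rho \<rho>0 \<rho>1 x * V (gamma1 p00 p10 \<rho>0 \<rho>1 x) + (1 - rho \<rho>0 \<rho>1 x) * V (gamma0 p00 p10 \<rho>0 \<rho>1 x))
        - (rho \<rho>0 \<rho>1 y * V (gamma1 p00 p10 \<rho>0 \<rho>1 y) + (1 - rho \<rho>0 \<rho>1 y) * V (gamma0 p00 p10 \<rho>0 \<rho>1 y))\<bar>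
        \<le> C * (p10 - p00) * (y - x) + e"
proof -
  define rx where "rx = rho \<rho>0 \<rho>1 x"
  define ry where "ry = rho \<rho>0 \<rho>1 y"
  define a1 where "a1 = gamma1 p00 p10 \<rho>0 \<rho>1 x"
  define b1 where "b1 = gamma1 p00 p10 \<rho>0 \<rho>1 y"
  define a0 where "a0 = gamma0 p00 p10 \<rho>0 \<rho>1 x"
  define b0 where "b0 = gamma0 p00 p10 \<rho>0 \<rho>1 y"
  have rx: "rx = x*\<rho>0 + (1-x)*\<rho>1" and ry: "ry = y*\<rho>0 + (1-y)*\<rho>1" unfolding rx_def ry_def rho_def by auto
  have e1x: "rx * a1 = (1-x)*\<rho>1*p10 + x*\<rho>0*p00" unfolding rx_def a1_def using r xy by (intro rho_mul_g1) auto
  have e1y: "ry * b1 = (1-y)*\<rho>1*p10 + y*\<rho>0*p00" unfolding ry_def b1_def using r xy by (intro rho_mul_g1) auto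
  have e0x: "(1-rx) * a0 = (1-x)*(1-\<rho>1)*p10 + x*(1-\<rho>0)*p00" unfolding rx_def a0_def using r xy by (intro rho_mul_g0) auto
  have e0y: "(1-ry) * b0 = (1-y)*(1-\<rho>1)*p10 + y*(1-\<rho>0)*p00" unfolding ry_def b0_def using r xy by (intro rho_mul_g0) auto
  have in01: "a1 \<in> {0..1}" "b1 \<in> {0..1}" "a0 \<in> {0..1}" "b0 \<in> {0..1}"
    unfolding a1_def b1_def a0_def b0_def using g1_01[of p00 p10 \<rho>0 \<rho>1] g0_01[of p00 p10 \<rho>1 \<rho>0] p r xy by auto
  have rxe: "rx = \<rho>1 - x * (\<rho>1 - \<rho>0)" and rye: "ry = \<rho>1 - y * (\<rho>1 - \<rho>0)" unfolding rx ry by (simp_all add: algebra_simps)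
  have "x * (\<rho>1 - \<rho>0) \<le> y * (\<rho>1 - \<rho>0)" using xy r by (intro mult_right_mono) auto
  then have ryx: "ry \<le> rx" unfolding rxe rye by linarith
  have ry0: "0 \<le> ry" unfolding ry using r xy by simp
  have rx1: "rx \<le> \<rho>1" unfolding rxe using r xy by simp
  have s1: "0 \<le> ry * (a1 - b1)"
  proof (cases "ry = 0")
    case False
    then have "0 < ry" "0 < rx" using ry0 ryx by auto
    moreover have "rx * ry * (a1 - b1) = \<rho>0 * \<rho>1 * (p10 - p00) * (y - x)"
    proof -
      have "rx * ry * (a1 - b1) = ry * (rx * a1) - rx * (ry * b1)" by (simp add: algebra_simps)
      also have "\<dots> = \<rho>0 * \<rho>1 * (p10 - p00) * (y - x)" unfolding e1x e1y unfolding rx ry by (simp add: algebra_simps)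
      finally show ?thesis .
    qed
    moreover have "0 \<le> \<rho>0 * \<rho>1 * (p10 - p00) * (y - x)" using r p xy by simp
    ultimately show ?thesis using nonneg_from_prod by (metis mult_nonneg_nonneg less_imp_le)
  qed simp
  have s0: "0 \<le> (1 - rx) * (a0 - b0)"
  proof (cases "1 - rx = 0")
    case False
    then have "0 < 1 - rx" "0 < 1 - ry" using rx1 r ryx by auto
    moreover have "(1 - rx) * (1 - ry) * (a0 - b0) = (1 - \<rho>0) * (1 - \<rho>1) * (p10 - p00) * (y - x)"
    proof -
      have "(1 - rx) * (1 - ry) * (a0 - b0) = (1 - ry) * ((1 - rx) * a0) - (1 - rx) * ((1 - ry) * b0)" by (simp add: algebra_simps)
      also have "\<dots> = (1 - \<rho>0) * (1 - \<rho>1) * (p10 - p00) * (y - x)" unfolding e0x e0y unfolding rx ry by (simp add: algebra_simps)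
      finally show ?thesis .
    qed
    moreover have "0 \<le> (1 - \<rho>0) * (1 - \<rho>1) * (p10 - p00) * (y - x)" using r p xy by simp
    ultimately show ?thesis using nonneg_from_prod by (metis mult_nonneg_nonneg less_imp_le)
  qed simp
  have s3: "0 \<le> (rx - ry) * (a1 - b0)"
  proof (cases "rx = ry")
    case False
    then have "0 < rx" "0 < 1 - ry" using rx1 r ryx ry0 by auto
    moreover have "rx * (1 - ry) * (a1 - b0) = (p10 - p00) * ((1 - x) * \<rho>1 * (1 - ry) - (1 - y) * (1 - \<rho>1) * rx)"
    proof -
      have "rx * (1 - ry) * (a1 - b0) = (1 - ry) * (rx * a1) - rx * ((1 - ry) * b0)" by (simp add: algebra_simps)
      also have "\<dots> = (p10 - p00) * ((1 - x) * \<rho>1 * (1 - ry) - (1 - y) * (1 - \<rho>1) * rx)" unfolding e1x e0y unfolding rx ry by (simp add: algebra_simps)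
      finally show ?thesis .
    qed
    moreover have "0 \<le> (p10 - p00) * ((1 - x) * \<rho>1 * (1 - ry) - (1 - y) * (1 - \<rho>1) * rx)"
    proof -
      have q1: "(1 - y) * (\<rho>1 * (1 - ry)) \<le> (1 - x) * (\<rho>1 * (1 - ry))"
        using xy r ry0 ryx rx1 by (intro mult_right_mono) auto
      have "(1 - \<rho>1) * rx \<le> \<rho>1 * (1 - ry)"
      proof -
        have "\<rho>1 * ry \<le> \<rho>1 * rx" using ryx r by (intro mult_left_mono) auto
        then show ?thesis using rx1 by (simp add: algebra_simps)
      qed
      then have q2: "(1 - y) * ((1 - \<rho>1) * rx) \<le> (1 - y) * (\<rho>1 * (1 - ry))" using xy by (intro mult_left_mono) auto
      have "0 \<le> (1 - x) * \<rho>1 * (1 - ry) - (1 - y) * (1 - \<rho>1) * rx" using q1 q2 by (simp add: ac_simps)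
      then show ?thesis using p by simp
    qed
    ultimately show ?thesis using nonneg_from_prod[of rx "1 - ry" a1 b0]
      by (metis mult_nonneg_nonneg less_imp_le diff_ge_0_iff_ge ryx)
  qed simp
  have dec: "(rx * V a1 + (1 - rx) * V a0) - (ry * V b1 + (1 - ry) * V b0)
     = ry * (V a1 - V b1) + (1 - rx) * (V a0 - V b0) + (rx - ry) * (V a1 - V b0)"
    by (simp add: algebra_simps)
  have t1: "\<bar>ry * (V a1 - V b1)\<bar> \<le> C * (ry * (a1 - b1)) + ry * e"
    using in01 L s1 ry0 C by (intro term_bound) auto
  have t0: "\<bar>(1 - rx) * (V a0 - V b0)\<bar> \<le> C * ((1 - rx) * (a0 - b0)) + (1 - rx) * e"
    using in01 L s0 rx1 r C by (intro term_bound) auto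
  have t3: "\<bar>(rx - ry) * (V a1 - V b0)\<bar> \<le> C * ((rx - ry) * (a1 - b0)) + (rx - ry) * e"
    using in01 L s3 ryx C by (intro term_bound) auto
  have sum: "ry * (a1 - b1) + (1 - rx) * (a0 - b0) + (rx - ry) * (a1 - b0) = (p10 - p00) * (y - x)"
  proof -
    have "ry * (a1 - b1) + (1 - rx) * (a0 - b0) + (rx - ry) * (a1 - b0)
       = rx * a1 - ry * b1 + (1 - rx) * a0 - (1 - ry) * b0" by (simp add: algebra_simps)
    also have "\<dots> = (p10 - p00) * (y - x)" unfolding e1x e1y e0x e0y by (simp add: algebra_simps)
    finally show ?thesis .
  qed
  have "\<bar>(rx * V a1 + (1 - rx) * V a0) - (ry * V b1 + (1 - ry) * V b0)\<bar>
     \<le> C * (ry * (a1 - b1) + (1 - rx) * (a0 - b0) + (rx - ry) * (a1 - b0)) + (ry + (1 - rx) + (rx - ry)) * e"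
    unfolding dec using t1 t0 t3 by (simp add: algebra_simps)
  also have "\<dots> = C * (p10 - p00) * (y - x) + e" unfolding sum by simp
  finally show ?thesis unfolding rx_def ry_def a1_def b1_def a0_def b0_def .
qed


lemma max_diff: "\<bar>a - c\<bar> \<le> (t::real) \<Longrightarrow> \<bar>b - d\<bar> \<le> t \<Longrightarrow> \<bar>max a b - max c d\<bar> \<le> t"
  by (auto simp: max_def abs_le_iff)

theorem lemma6:
  fixes p00 p10 \<rho>0 \<rho>1 R0 R1 \<eta> \<beta> :: real and K :: nat
    and VS VNS V :: "real \<Rightarrow> real"
  assumes p00: "0 \<le> p00" "p00 \<le> 1" and p10: "0 \<le> p10" "p10 \<le> 1"
    and rho0: "0 \<le> \<rho>0" and rho1: "\<rho>1 \<le> 1" and rho_lt: "\<rho>0 < \<rho>1"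
    and R_lt: "R0 < R1"
    and beta: "0 < \<beta>" "\<beta> < 1"
    and K: "K > 1"
    and p_lt: "p00 < p10"
    and sol: "bandit_solution p00 p10 \<rho>0 \<rho>1 R0 R1 \<eta> \<beta> K VS VNS V"
    and cond: "p10 - p00 < min 1 ((R1 - R0) / (\<rho>1 - \<rho>0)) / 5
             \<or> \<beta> < min 1 ((R1 - R0) / (\<rho>1 - \<rho>0)) / 5"
  shows "\<forall>x\<in>{0..1}. \<forall>y\<in>{0..1}. x \<le> y \<longrightarrow> VS y - VNS y \<le> VS x - VNS x"
proof -
  define \<delta> where "\<delta> = p10 - p00"
  define W where "W = (\<lambda>\<pi>. rho \<rho>0 \<rho>1 \<pi> * V (gamma1 p00 p10 \<rho>0 \<rho>1 \<pi>)
                 + (1 - rho \<rho>0 \<rho>1 \<pi>) * V (gamma0 p00 p10 \<rho>0 \<rho>1 \<pi>))"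
  have d0: "0 < \<delta>" and d1: "\<delta> \<le> 1" using p_lt p00 p10 unfolding \<delta>_def by auto
  define m where "m = min 1 ((R1 - R0) / (\<rho>1 - \<rho>0)) / 5"
  have mb: "m \<le> 1/5" unfolding m_def by simp
  have cond': "\<delta> < m \<or> \<beta> < m" using cond unfolding m_def \<delta>_def .
  have bd: "\<beta> * \<delta> < 1/5"
  proof (cases "\<delta> < 1/5")
    case True
    have "\<beta> * \<delta> \<le> 1 * \<delta>" using beta d0 by (intro mult_right_mono) auto
    then show ?thesis using True by simp
  next
    case False
    then have "\<beta> < 1/5" using cond' mb by auto
    moreover have "\<beta> * \<delta> \<le> \<beta> * 1" using beta d1 by (intro mult_left_mono) auto
    ultimately show ?thesis by simp
  qed
  have bd0: "0 < \<beta> * \<delta>" using beta d0 by simp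
  define C where "C = (R1 - R0) / (1 - \<beta> * \<delta>)"
  have C0: "0 < C" unfolding C_def using R_lt bd by simp
  have CR: "(R1 - R0) + \<beta> * \<delta> * C = C" unfolding C_def using bd by (simp add: field_simps)
  have dK: "\<bar>(p00 - p10) ^ K\<bar> = \<delta> ^ K" unfolding \<delta>_def using p_lt by (simp add: power_abs abs_minus_commute)
  have dKd: "\<delta> ^ K \<le> \<delta>" using power_decreasing[of 1 K \<delta>] K d0 d1 by simp
  have bnd: "bounded (V ` {0..1})" and eqs: "\<And>\<pi>. \<pi> \<in> {0..1} \<Longrightarrow>
        VS \<pi> = R_S R0 R1 \<pi> + \<beta> * W \<pi> \<and> VNS \<pi> = \<eta> + \<beta> * V (gamma2 p00 p10 K \<pi>) \<and> V \<pi> = max (VS \<pi>) (VNS \<pi>)"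
    using sol unfolding bandit_solution_def W_def by auto
  obtain M where M: "\<And>u. u \<in> {0..1} \<Longrightarrow> \<bar>V u\<bar> \<le> M" using bnd unfolding bounded_iff by (metis atLeastAtMost_iff image_eqI real_norm_def)
  have g2in: "\<And>u. u \<in> {0..1} \<Longrightarrow> gamma2 p00 p10 K u \<in> {0..1}" using g2_01 p00 p10 by auto
  have Wb: "\<And>x y e. 0 \<le> x \<Longrightarrow> x \<le> y \<Longrightarrow> y \<le> 1 \<Longrightarrow>
      \<forall>u\<in>{0..1}. \<forall>v\<in>{0..1}. \<bar>V u - V v\<bar> \<le> C * \<bar>u - v\<bar> + e \<Longrightarrow> \<bar>W x - W y\<bar> \<le> C * \<delta> * (y - x) + e"
    unfolding W_def \<delta>_def using p00 p10 p_lt rho0 rho_lt rho1 C0 by (intro W_bound) auto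
  have RS: "\<And>u v. R_S R0 R1 u - R_S R0 R1 v = (R1 - R0) * (v - u)" unfolding R_S_def by (simp add: algebra_simps)
  have step: "\<forall>u\<in>{0..1}. \<forall>v\<in>{0..1}. \<bar>V u - V v\<bar> \<le> C * \<bar>u - v\<bar> + \<beta> * e"
    if P: "\<forall>u\<in>{0..1}. \<forall>v\<in>{0..1}. \<bar>V u - V v\<bar> \<le> C * \<bar>u - v\<bar> + e" and e0: "0 \<le> e" for e
  proof -
    have VSle: "\<bar>VS u - VS v\<bar> \<le> C * \<bar>u - v\<bar> + \<beta> * e" if uv: "u \<in> {0..1}" "v \<in> {0..1}" "u \<le> v" for u v :: real
    proof -
      have "VS u - VS v = (R1 - R0) * (v - u) + \<beta> * (W u - W v)" using eqs[OF uv(1)] eqs[OF uv(2)] RS[of u v] by (simp add: algebra_simps)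
      moreover have "\<bar>\<beta> * (W u - W v)\<bar> \<le> \<beta> * (C * \<delta> * (v - u) + e)"
        using Wb[of u v e] uv P beta by (simp add: abs_mult mult_left_mono)
      ultimately have "\<bar>VS u - VS v\<bar> \<le> (R1 - R0) * (v - u) + \<beta> * (C * \<delta> * (v - u) + e)"
      proof -
        have "0 \<le> (R1 - R0) * (v - u)" using R_lt uv by simp
        then show ?thesis using \<open>VS u - VS v = _\<close> \<open>\<bar>\<beta> * (W u - W v)\<bar> \<le> _\<close> by (simp add: abs_le_iff)
      qed
      also have "\<dots> = ((R1 - R0) + \<beta> * \<delta> * C) * (v - u) + \<beta> * e" by (simp add: algebra_simps)
      also have "\<dots> = C * \<bar>u - v\<bar> + \<beta> * e" using CR uv by simp
      finally show ?thesis .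
    qed
    have VNSle: "\<bar>VNS u - VNS v\<bar> \<le> C * \<bar>u - v\<bar> + \<beta> * e" if uv: "u \<in> {0..1}" "v \<in> {0..1}" for u v :: real
    proof -
      have "\<bar>VNS u - VNS v\<bar> = \<beta> * \<bar>V (gamma2 p00 p10 K u) - V (gamma2 p00 p10 K v)\<bar>"
        using eqs[OF uv(1)] eqs[OF uv(2)] beta by (simp add: abs_mult flip: right_diff_distrib)
      also have "\<dots> \<le> \<beta> * (C * \<bar>gamma2 p00 p10 K u - gamma2 p00 p10 K v\<bar> + e)"
        using P g2in uv beta by (intro mult_left_mono) auto
      also have "\<bar>gamma2 p00 p10 K u - gamma2 p00 p10 K v\<bar> = \<delta> ^ K * \<bar>u - v\<bar>" by (simp add: g2_diff abs_mult dK)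
      also have "\<beta> * (C * (\<delta> ^ K * \<bar>u - v\<bar>) + e) \<le> 1 * (C * (1 * \<bar>u - v\<bar>)) + \<beta> * e"
      proof -
        have "\<delta> ^ K \<le> 1" using dKd d1 by simp
        then have "\<delta> ^ K * \<bar>u - v\<bar> \<le> 1 * \<bar>u - v\<bar>" by (intro mult_right_mono) auto
        then have "C * (\<delta> ^ K * \<bar>u - v\<bar>) \<le> C * (1 * \<bar>u - v\<bar>)" using C0 by (intro mult_left_mono) auto
        moreover have "0 \<le> C * (\<delta> ^ K * \<bar>u - v\<bar>)" using C0 d0 by simp
        moreover have "\<beta> * (C * (\<delta> ^ K * \<bar>u - v\<bar>)) \<le> 1 * (C * (\<delta> ^ K * \<bar>u - v\<bar>))"
          using beta \<open>0 \<le> C * (\<delta> ^ K * \<bar>u - v\<bar>)\<close> by (intro mult_right_mono) auto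
        ultimately have "\<beta> * (C * (\<delta> ^ K * \<bar>u - v\<bar>)) \<le> 1 * (C * (1 * \<bar>u - v\<bar>))" by linarith
        then show ?thesis by (simp add: algebra_simps)
      qed
      finally show ?thesis by simp
    qed
    show ?thesis
    proof (intro ballI)
      fix u v :: real assume uv: "u \<in> {0..1}" "v \<in> {0..1}"
      have "\<bar>VS u - VS v\<bar> \<le> C * \<bar>u - v\<bar> + \<beta> * e"
      proof (cases "u \<le> v")
        case True then show ?thesis using VSle uv by auto
      next
        case False then show ?thesis using VSle[of v u] uv by (simp add: abs_minus_commute)
      qed
      then show "\<bar>V u - V v\<bar> \<le> C * \<bar>u - v\<bar> + \<beta> * e"
        using eqs[OF uv(1)] eqs[OF uv(2)] VNSle[OF uv] max_diff by metis
    qed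
  qed
  define M' where "M' = max M 0 + 1"
  have M'0: "0 < M'" unfolding M'_def by simp
  have iter: "\<forall>u\<in>{0..1}. \<forall>v\<in>{0..1}. \<bar>V u - V v\<bar> \<le> C * \<bar>u - v\<bar> + \<beta> ^ n * (2 * M')" for n
  proof (induction n)
    case 0
    show ?case
    proof (intro ballI)
      fix u v :: real assume "u \<in> {0..1}" "v \<in> {0..1}"
      then have "\<bar>V u\<bar> \<le> M'" "\<bar>V v\<bar> \<le> M'" using M unfolding M'_def by force+
      moreover have "0 \<le> C * \<bar>u - v\<bar>" using C0 by simp
      ultimately show "\<bar>V u - V v\<bar> \<le> C * \<bar>u - v\<bar> + \<beta> ^ 0 * (2 * M')" by simp
    qed
  next
    case (Suc n)
    have "0 \<le> \<beta> ^ n * (2 * M')" using beta M'0 by simp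
    from step[OF Suc this] show ?case by (simp add: mult.assoc)
  qed
  have Lip: "\<bar>V u - V v\<bar> \<le> C * \<bar>u - v\<bar>" if uv: "u \<in> {0..1}" "v \<in> {0..1}" for u v :: real
  proof (rule ccontr)
    assume "\<not> ?thesis"
    then have g: "0 < (\<bar>V u - V v\<bar> - C * \<bar>u - v\<bar>) / (2 * M')" using M'0 by simp
    obtain n where "\<beta> ^ n < (\<bar>V u - V v\<bar> - C * \<bar>u - v\<bar>) / (2 * M')" using real_arch_pow_inv[OF g beta(2)] by auto
    then have "\<beta> ^ n * (2 * M') < \<bar>V u - V v\<bar> - C * \<bar>u - v\<bar>" using M'0 by (simp add: field_simps)
    then show False using iter[of n] uv by fastforce
  qed
  then have Lip0: "\<forall>u\<in>{0..1}. \<forall>v\<in>{0..1}. \<bar>V u - V v\<bar> \<le> C * \<bar>u - v\<bar> + 0" by simp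
  show ?thesis
  proof (intro ballI impI)
    fix x y :: real assume x: "x \<in> {0..1}" and y: "y \<in> {0..1}" and xy: "x \<le> y"
    have w: "\<bar>W x - W y\<bar> \<le> C * \<delta> * (y - x)" using Wb[OF _ xy _ Lip0] x y by simp
    have a: "VS y - VS x = - (R1 - R0) * (y - x) + \<beta> * (W y - W x)"
      using eqs[OF x] eqs[OF y] RS[of y x] by (simp add: algebra_simps)
    have "\<beta> * (W y - W x) \<le> \<beta> * (C * \<delta> * (y - x))" using w beta by (intro mult_left_mono) auto
    then have a2: "VS y - VS x \<le> - (R1 - R0) * (y - x) + \<beta> * \<delta> * C * (y - x)" using a by (simp add: algebra_simps)
    have "VNS x - VNS y = \<beta> * (V (gamma2 p00 p10 K x) - V (gamma2 p00 p10 K y))"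
      using eqs[OF x] eqs[OF y] by (simp add: algebra_simps)
    also have "\<dots> \<le> \<beta> * (C * \<bar>gamma2 p00 p10 K x - gamma2 p00 p10 K y\<bar>)"
      using Lip[OF g2in[OF x] g2in[OF y]] beta by (intro mult_left_mono) auto
    also have "\<bar>gamma2 p00 p10 K x - gamma2 p00 p10 K y\<bar> = \<delta> ^ K * (y - x)" using xy by (simp add: g2_diff abs_mult dK)
    also have "\<beta> * (C * (\<delta> ^ K * (y - x))) \<le> \<beta> * \<delta> * C * (y - x)"
    proof -
      have "\<delta> ^ K * (y - x) \<le> \<delta> * (y - x)" using dKd xy by (intro mult_right_mono) auto
      then have "C * (\<delta> ^ K * (y - x)) \<le> C * (\<delta> * (y - x))" using C0 by (intro mult_left_mono) auto
      then have "\<beta> * (C * (\<delta> ^ K * (y - x))) \<le> \<beta> * (C * (\<delta> * (y - x)))" using beta by (metis less_imp_le mult_left_mono)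
      then show ?thesis by (simp add: algebra_simps)
    qed
    finally have b2: "VNS x - VNS y \<le> \<beta> * \<delta> * C * (y - x)" .
    have "2 * (\<beta> * \<delta> * C) - (R1 - R0) = C * (3 * (\<beta> * \<delta>) - 1)" using CR by (simp add: algebra_simps)
    also have "\<dots> \<le> 0" using C0 bd by (intro mult_nonneg_nonpos) auto
    finally have "(2 * (\<beta> * \<delta> * C) - (R1 - R0)) * (y - x) \<le> 0" using xy by (intro mult_nonpos_nonneg) auto
    then show "VS y - VNS y \<le> VS x - VNS x" using a2 b2 by (simp add: algebra_simps)
  qed
qed

end
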